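(* Let $K$ be a clique simplicial complex, $X\cup Y=K_0$ a cover of its vertex set, $A:=X\cap Y$, and $P:=\{\sigma\in K\mid\sigma\subset X\text{ or }\sigma\subset Y\text{ or }\sigma\cap A\neq\emptyset\}$. Assume one of the following: (1) there is a vertex $v$ in $\bigcap_{\tau\in K_1\setminus P}\mathrm{St}(\tau,A)$ such that, for every edge $\tau\in K_1\setminus P$ and every vertex $w$ of $\mathrm{St}(\tau,A)$, $\{v,w\}$ is a simplex of $K$; (2) there is a vertex $v$ in $\bigcap_{\tau\in K_1\setminus P}\mathrm{St}(\tau,A)$ such that, for every edge $\tau\in K_1\setminus P$, $v$ is a central vertex of $\mathrm{St}(\tau,A)$; (3) there is $v\in A$ such that for every simplex $\tau$ of $K$ with $|\tau\cap(X\setminus A)|=1$, $|\tau\cap(Y\setminus A)|=1$ and $|\tau\cap A|\le1$, the set $\tau\cup\{v\}$ is a simplex of $K$. Then the inclusion $K_X\cup K_Y\hookrightarrow K$ is a weak equivalence.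
   Context: A simplicial complex is a collection of finite nonempty subsets of a fixed set closed under taking nonempty subsets; $K_0$ is its vertex set, $K_1$ its set of edges, $K_B$ the subcomplex of simplices contained in $B$. $K$ is clique if a set with at least two elements is a simplex iff all its two-element subsets are simplices. $\mathrm{St}(\sigma,A):=\{\mu\subset A\mid 0<|\mu|<\infty,\ \mu\cup\sigma\in K\}$. A simplex $\tau$ of a complex $L$ is central if $\sigma\cup\tau\in L$ for every simplex $\sigma$ of $L$; a vertex $v$ is central if $\{v\}$ is. Homotopical notions refer to geometric realizations. *)

theory Defs
  imports "HOL-Analysis.Analysis"
begin

definition simplicial_complex :: "'a set set \<Rightarrow> bool" where
  "simplicial_complex K \<longleftrightarrow>
     (\<forall>\<sigma>\<in>K. finite \<sigma> \<and> \<sigma> \<noteq> {}) \<and>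
     (\<forall>\<sigma>\<in>K. \<forall>\<mu>. \<mu> \<subseteq> \<sigma> \<and> \<mu> \<noteq> {} \<longrightarrow> \<mu> \<in> K)"

definition vertices :: "'a set set \<Rightarrow> 'a set" where
  "vertices K = {v. {v} \<in> K}"

definition edges :: "'a set set \<Rightarrow> 'a set set" where
  "edges K = {\<sigma>\<in>K. card \<sigma> = 2}"

definition full_subcomplex :: "'a set set \<Rightarrow> 'a set \<Rightarrow> 'a set set" where
  "full_subcomplex K B = {\<sigma>\<in>K. \<sigma> \<subseteq> B}"

definition clique_complex :: "'a set set \<Rightarrow> bool" where
  "clique_complex K \<longleftrightarrow>
     (\<forall>\<sigma>. finite \<sigma> \<and> card \<sigma> \<ge> 2 \<longrightarrow>
        (\<sigma> \<in> K \<longleftrightarrow> (\<forall>u\<in>\<sigma>. \<forall>w\<in>\<sigma>. u \<noteq> w \<longrightarrow> {u, w} \<in> K)))"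

definition St :: "'a set set \<Rightarrow> 'a set \<Rightarrow> 'a set \<Rightarrow> 'a set set" where
  "St K \<sigma> A = {\<mu>. \<mu> \<subseteq> A \<and> \<mu> \<noteq> {} \<and> finite \<mu> \<and> \<mu> \<union> \<sigma> \<in> K}"

definition central_simplex :: "'a set set \<Rightarrow> 'a set \<Rightarrow> bool" where
  "central_simplex L \<tau> \<longleftrightarrow> \<tau> \<in> L \<and> (\<forall>\<sigma>\<in>L. \<sigma> \<union> \<tau> \<in> L)"

definition central_vertex :: "'a set set \<Rightarrow> 'a \<Rightarrow> bool" where
  "central_vertex L v \<longleftrightarrow> central_simplex L {v}"

definition geom_simplex :: "'a set \<Rightarrow> ('a \<Rightarrow> real) set" where
  "geom_simplex \<sigma> = {x. (\<forall>i. 0 \<le> x i) \<and> {i. x i \<noteq> 0} \<subseteq> \<sigma> \<and> sum x \<sigma> = 1}"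

definition geom_realization :: "'a set set \<Rightarrow> ('a \<Rightarrow> real) set" where
  "geom_realization K = (\<Union>\<sigma>\<in>K. geom_simplex \<sigma>)"

definition realization_top :: "'a set set \<Rightarrow> ('a \<Rightarrow> real) topology" where
  "realization_top K = topology (\<lambda>U. U \<subseteq> geom_realization K \<and>
      (\<forall>\<sigma>\<in>K. openin (subtopology (powertop_real UNIV) (geom_simplex \<sigma>))
                      (U \<inter> geom_simplex \<sigma>)))"

definition sphere_base :: "nat \<Rightarrow> real" where
  "sphere_base = (\<lambda>i. if i = 0 then 1 else 0)"

definition pointed_sphere_map :: "nat \<Rightarrow> 'b topology \<Rightarrow> 'b \<Rightarrow> ((nat \<Rightarrow> real) \<Rightarrow> 'b) \<Rightarrow> bool" where
  "pointed_sphere_map n X x0 g \<longleftrightarrow> continuous_map (nsphere n) X g \<and> g sphere_base = x0"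

definition pointed_homotopic :: "nat \<Rightarrow> 'b topology \<Rightarrow> 'b \<Rightarrow> ((nat \<Rightarrow> real) \<Rightarrow> 'b) \<Rightarrow> ((nat \<Rightarrow> real) \<Rightarrow> 'b) \<Rightarrow> bool" where
  "pointed_homotopic n X x0 g h \<longleftrightarrow> homotopic_with (\<lambda>k. k sphere_base = x0) (nsphere n) X g h"

text \<open>f is a weak homotopy equivalence: continuous, and for every n and every base
  point x0 the induced map pi_n(X,x0) -> pi_n(Y,f x0), [g] |-> [f o g], is a bijection
  (pi_n = pointed homotopy classes of pointed maps from the n-sphere; pi_0 as pointed set).\<close>
definition weak_equivalence :: "'b topology \<Rightarrow> 'c topology \<Rightarrow> ('b \<Rightarrow> 'c) \<Rightarrow> bool" where
  "weak_equivalence X Y f \<longleftrightarrow> continuous_map X Y f \<and>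
     (\<forall>n x0. x0 \<in> topspace X \<longrightarrow>
        (\<forall>g. pointed_sphere_map n Y (f x0) g \<longrightarrow>
             (\<exists>h. pointed_sphere_map n X x0 h \<and> pointed_homotopic n Y (f x0) (f \<circ> h) g)) \<and>
        (\<forall>h1 h2. pointed_sphere_map n X x0 h1 \<and> pointed_sphere_map n X x0 h2 \<and>
             pointed_homotopic n Y (f x0) (f \<circ> h1) (f \<circ> h2) \<longrightarrow>
             pointed_homotopic n X x0 h1 h2))"

end

theory Submission
  imports Defs
begin
lemma pt_eq: "powertop_real UNIV = (euclidean :: ('a \<Rightarrow> real) topology)"
  by (rule euclidean_product_topology)

lemma openin_rt:
  "openin (realization_top K) U \<longleftrightarrow> U \<subseteq> geom_realization K \<and>
      (\<forall>\<sigma>\<in>K. openin (top_of_set (geom_simplex \<sigma>)) (U \<inter> geom_simplex \<sigma>))"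
proof -
  have "istopology (\<lambda>U. U \<subseteq> geom_realization K \<and>
      (\<forall>\<sigma>\<in>K. openin (subtopology (powertop_real UNIV) (geom_simplex \<sigma>)) (U \<inter> geom_simplex \<sigma>)))"
    unfolding istopology_def
  proof (rule conjI; intro allI impI)
    fix S T assume S: "S \<subseteq> geom_realization K \<and>
      (\<forall>\<sigma>\<in>K. openin (subtopology (powertop_real UNIV) (geom_simplex \<sigma>)) (S \<inter> geom_simplex \<sigma>))"
      and T: "T \<subseteq> geom_realization K \<and>
      (\<forall>\<sigma>\<in>K. openin (subtopology (powertop_real UNIV) (geom_simplex \<sigma>)) (T \<inter> geom_simplex \<sigma>))"
    show "S \<inter> T \<subseteq> geom_realization K \<and>
      (\<forall>\<sigma>\<in>K. openin (subtopology (powertop_real UNIV) (geom_simplex \<sigma>)) (S \<inter> T \<inter> geom_simplex \<sigma>))"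
    proof (intro conjI ballI)
      show "S \<inter> T \<subseteq> geom_realization K" using S by auto
      fix \<sigma> assume "\<sigma> \<in> K"
      then have "openin (subtopology (powertop_real UNIV) (geom_simplex \<sigma>)) ((S \<inter> geom_simplex \<sigma>) \<inter> (T \<inter> geom_simplex \<sigma>))"
        using S T \<open>\<sigma> \<in> K\<close> by (simp add: openin_Int)
      then show "openin (subtopology (powertop_real UNIV) (geom_simplex \<sigma>)) (S \<inter> T \<inter> geom_simplex \<sigma>)"
        by (simp add: Int_ac)
    qed
  next
    fix \<K> :: "('a \<Rightarrow> real) set set"
    assume H: "\<forall>S\<in>\<K>. S \<subseteq> geom_realization K \<and>
      (\<forall>\<sigma>\<in>K. openin (subtopology (powertop_real UNIV) (geom_simplex \<sigma>)) (S \<inter> geom_simplex \<sigma>))"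
    show "\<Union>\<K> \<subseteq> geom_realization K \<and>
      (\<forall>\<sigma>\<in>K. openin (subtopology (powertop_real UNIV) (geom_simplex \<sigma>)) (\<Union>\<K> \<inter> geom_simplex \<sigma>))"
    proof (intro conjI ballI)
      show "\<Union>\<K> \<subseteq> geom_realization K" using H by auto
      fix \<sigma> assume "\<sigma> \<in> K"
      have "openin (subtopology (powertop_real UNIV) (geom_simplex \<sigma>)) (\<Union>S\<in>\<K>. S \<inter> geom_simplex \<sigma>)"
        using H \<open>\<sigma> \<in> K\<close> by (intro openin_Union) auto
      moreover have "(\<Union>S\<in>\<K>. S \<inter> geom_simplex \<sigma>) = \<Union>\<K> \<inter> geom_simplex \<sigma>" by auto
      ultimately show "openin (subtopology (powertop_real UNIV) (geom_simplex \<sigma>)) (\<Union>\<K> \<inter> geom_simplex \<sigma>)"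
        by simp
    qed
  qed
  then show ?thesis unfolding realization_top_def by (simp add: pt_eq)
qed

lemma topspace_rt [simp]: "topspace (realization_top K) = geom_realization K"
proof -
  have "openin (realization_top K) (geom_realization K)"
    unfolding openin_rt
  proof (intro conjI ballI)
    fix \<sigma> assume "\<sigma> \<in> K"
    then have "geom_realization K \<inter> geom_simplex \<sigma> = topspace (top_of_set (geom_simplex \<sigma>))"
      by (auto simp: geom_realization_def)
    then show "openin (top_of_set (geom_simplex \<sigma>)) (geom_realization K \<inter> geom_simplex \<sigma>)"
      by (metis openin_topspace)
  qed simp
  then have "geom_realization K \<subseteq> topspace (realization_top K)"
    by (simp add: openin_subset)
  moreover have "topspace (realization_top K) \<subseteq> geom_realization K"
    by (metis openin_rt openin_topspace)
  ultimately show ?thesis by blast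
qed

lemma closed_geom_simplex:
  assumes "finite \<sigma>"
  shows "closed (geom_simplex \<sigma>)"
proof -
  have eq: "geom_simplex \<sigma> = (\<Inter>i. {x. 0 \<le> x i}) \<inter> (\<Inter>i\<in>-\<sigma>. {x. x i = 0}) \<inter> {x. (\<Sum>i\<in>\<sigma>. x i) = 1}"
    by (auto simp: geom_simplex_def)
  have c: "continuous_on UNIV (\<lambda>x::'a\<Rightarrow>real. x i)" for i by simp
  show ?thesis unfolding eq
    by (intro closed_Int closed_INT ballI allI closed_Collect_le closed_Collect_eq continuous_intros c
          continuous_on_sum) 
qed

lemma openin_union_simplices:
  assumes "finite T" "\<forall>\<tau>\<in>T. finite \<tau>"
    and "\<forall>\<tau>\<in>T. openin (top_of_set (geom_simplex \<tau>)) (U \<inter> geom_simplex \<tau>)"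
  shows "openin (top_of_set (\<Union>(geom_simplex ` T))) (\<Union>(geom_simplex ` T) \<inter> U)"
proof -
  let ?S = "\<Union>(geom_simplex ` T)"
  let ?C = "\<Union>\<tau>\<in>T. geom_simplex \<tau> - U"
  have "closed (geom_simplex \<tau> - U)" if "\<tau> \<in> T" for \<tau>
  proof -
    have "closedin (top_of_set (geom_simplex \<tau>)) (geom_simplex \<tau> - U \<inter> geom_simplex \<tau>)"
      using assms(3) that by (metis openin_closedin_eq topspace_euclidean_subtopology)
    then have "closedin (top_of_set (geom_simplex \<tau>)) (geom_simplex \<tau> - U)"
      by (metis Diff_Int2 Int_absorb)
    then show ?thesis
      using closedin_closed_trans closed_geom_simplex assms(2) that by blast
  qed
  then have "closed ?C" using assms(1) by (intro closed_UN) auto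
  then have o: "open (- ?C)" unfolding closed_def .
  have "openin (top_of_set ?S) (?S \<inter> (- ?C))"
    by (rule openin_open_Int[OF o])
  moreover have "?S \<inter> (- ?C) = ?S \<inter> U" by auto
  ultimately show ?thesis by simp
qed

lemma cont_prod_rt:
  assumes K': "\<forall>\<sigma>\<in>K'. finite \<sigma>"
    and F: "\<And>\<sigma>. \<sigma> \<in> K \<Longrightarrow> \<exists>T. finite T \<and> T \<subseteq> K' \<and>
        F ` ({0..1} \<times> geom_simplex \<sigma>) \<subseteq> \<Union>(geom_simplex ` T) \<and>
        continuous_on ({0..1} \<times> geom_simplex \<sigma>) F"
  shows "continuous_map (prod_topology (top_of_set {0..1::real}) (realization_top K)) (realization_top K') F"
  unfolding continuous_map_def
proof (intro conjI allI impI)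
  show "F \<in> topspace (prod_topology (top_of_set {0..1::real}) (realization_top K)) \<rightarrow> topspace (realization_top K')"
  proof
    fix z assume "z \<in> topspace (prod_topology (top_of_set {0..1::real}) (realization_top K))"
    then obtain t x \<sigma> where z: "z = (t,x)" "t \<in> {0..1}" "\<sigma> \<in> K" "x \<in> geom_simplex \<sigma>"
      by (auto simp: geom_realization_def)
    obtain T where "T \<subseteq> K'" "F ` ({0..1} \<times> geom_simplex \<sigma>) \<subseteq> \<Union>(geom_simplex ` T)"
      using F[OF z(3)] by blast
    then have "F (t,x) \<in> \<Union>(geom_simplex ` T)" using z by blast
    then show "F z \<in> topspace (realization_top K')"
      using z \<open>T \<subseteq> K'\<close> by (auto simp: geom_realization_def)
  qed
next
  fix U assume U: "openin (realization_top K') U"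
  let ?I = "{0..1::real}"
  let ?W = "{z \<in> topspace (prod_topology (top_of_set ?I) (realization_top K)). F z \<in> U}"
  have Wsig: "openin (prod_topology (top_of_set ?I) (top_of_set (geom_simplex \<sigma>)))
      {z \<in> ?I \<times> geom_simplex \<sigma>. F z \<in> U}" if sK: "\<sigma> \<in> K" for \<sigma>
  proof -
    obtain T where T: "finite T" "T \<subseteq> K'" "F ` (?I \<times> geom_simplex \<sigma>) \<subseteq> \<Union>(geom_simplex ` T)"
      "continuous_on (?I \<times> geom_simplex \<sigma>) F"
      using F[OF sK] by blast
    have "openin (top_of_set (\<Union>(geom_simplex ` T))) (\<Union>(geom_simplex ` T) \<inter> U)"
      using T(1,2) K' U by (intro openin_union_simplices) (auto simp: openin_rt)
    then have "openin (top_of_set (?I \<times> geom_simplex \<sigma>)) ((?I \<times> geom_simplex \<sigma>) \<inter> F -` (\<Union>(geom_simplex ` T) \<inter> U))"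
      using T(3,4) by (intro continuous_openin_preimage) auto
    moreover have "(?I \<times> geom_simplex \<sigma>) \<inter> F -` (\<Union>(geom_simplex ` T) \<inter> U) = {z \<in> ?I \<times> geom_simplex \<sigma>. F z \<in> U}"
      using T(3) by (auto simp: image_subset_iff)
    ultimately show ?thesis by simp
  qed
  show "openin (prod_topology (top_of_set ?I) (realization_top K)) ?W"
  proof (subst openin_subopen, intro ballI)
    fix z assume "z \<in> ?W"
    then obtain t0 x0 \<sigma>0 where z: "z = (t0,x0)" "t0 \<in> ?I" "\<sigma>0 \<in> K" "x0 \<in> geom_simplex \<sigma>0" "F z \<in> U"
      by (auto simp: geom_realization_def)
    have "{t0} \<times> {x0} \<subseteq> {z \<in> ?I \<times> geom_simplex \<sigma>0. F z \<in> U}" using z by auto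
    then obtain J0 V0 where J0: "openin (top_of_set ?I) J0" "openin (top_of_set (geom_simplex \<sigma>0)) V0"
       "t0 \<in> J0" "x0 \<in> V0" "J0 \<times> V0 \<subseteq> {z \<in> ?I \<times> geom_simplex \<sigma>0. F z \<in> U}"
      using tube_lemma_left[OF Wsig[OF z(3)], of "{t0}" x0] z by auto
    obtain e where e: "e > 0" "\<And>t'. t' \<in> ?I \<Longrightarrow> dist t' t0 < e \<Longrightarrow> t' \<in> J0"
      using J0(1,3) openin_euclidean_subtopology_iff by metis
    define C where "C = cball t0 (e/2) \<inter> ?I"
    define J where "J = ?I \<inter> ball t0 (e/2)"
    define V where "V = {x \<in> geom_realization K. \<forall>t\<in>C. F (t,x) \<in> U}"
    have CJ0: "C \<subseteq> J0" using e by (auto simp: C_def dist_commute)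
    have compC: "compactin (top_of_set ?I) C"
      unfolding compactin_subtopology by (auto simp: C_def compact_Int_closed)
    have "x0 \<in> V"
      using z J0 CJ0 by (auto simp: V_def geom_realization_def)
    moreover have "openin (realization_top K) V"
      unfolding openin_rt
    proof (intro conjI ballI)
      show "V \<subseteq> geom_realization K" by (auto simp: V_def)
      fix \<sigma> assume \<sigma>: "\<sigma> \<in> K"
      show "openin (top_of_set (geom_simplex \<sigma>)) (V \<inter> geom_simplex \<sigma>)"
      proof (subst openin_subopen, intro ballI)
        fix x assume x: "x \<in> V \<inter> geom_simplex \<sigma>"
        have "C \<times> {x} \<subseteq> {z \<in> ?I \<times> geom_simplex \<sigma>. F z \<in> U}"
          using x by (auto simp: V_def C_def)
        then obtain U' V' where UV: "openin (top_of_set ?I) U'" "openin (top_of_set (geom_simplex \<sigma>)) V'"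
          "C \<subseteq> U'" "x \<in> V'" "U' \<times> V' \<subseteq> {z \<in> ?I \<times> geom_simplex \<sigma>. F z \<in> U}"
          using tube_lemma_left[OF Wsig[OF \<sigma>] compC, of x] x by auto
        have "V' \<subseteq> V \<inter> geom_simplex \<sigma>"
        proof
          fix y assume y: "y \<in> V'"
          then have "y \<in> geom_simplex \<sigma>" using UV(2) openin_subset by fastforce
          moreover have "F (t,y) \<in> U" if "t \<in> C" for t
            using UV(3,5) y that by blast
          ultimately show "y \<in> V \<inter> geom_simplex \<sigma>"
            using \<sigma> by (auto simp: V_def geom_realization_def)
        qed
        then show "\<exists>T. openin (top_of_set (geom_simplex \<sigma>)) T \<and> x \<in> T \<and> T \<subseteq> V \<inter> geom_simplex \<sigma>"
          using UV by blast
      qed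
    qed
    moreover have "openin (top_of_set ?I) J" unfolding J_def by (intro openin_open_Int) auto
    moreover have "t0 \<in> J" using z e by (auto simp: J_def)
    moreover have "J \<times> V \<subseteq> ?W"
      by (auto simp: J_def V_def C_def)
    ultimately show "\<exists>T. openin (prod_topology (top_of_set ?I) (realization_top K)) T \<and> z \<in> T \<and> T \<subseteq> ?W"
      using z by (intro exI[of _ "J \<times> V"]) (auto simp: openin_prod_Times_iff)
  qed
qed

lemma cont_rt:
  assumes K': "\<forall>\<sigma>\<in>K'. finite \<sigma>"
    and G: "\<And>\<sigma>. \<sigma> \<in> K \<Longrightarrow> \<exists>T. finite T \<and> T \<subseteq> K' \<and>
        G ` (geom_simplex \<sigma>) \<subseteq> \<Union>(geom_simplex ` T) \<and> continuous_on (geom_simplex \<sigma>) G"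
  shows "continuous_map (realization_top K) (realization_top K') G"
proof -
  have "continuous_map (prod_topology (top_of_set {0..1::real}) (realization_top K)) (realization_top K') (G \<circ> snd)"
  proof (rule cont_prod_rt[OF K'])
    fix \<sigma> assume sK: "\<sigma> \<in> K"
    obtain T where T: "finite T" "T \<subseteq> K'" "G ` (geom_simplex \<sigma>) \<subseteq> \<Union>(geom_simplex ` T)"
      "continuous_on (geom_simplex \<sigma>) G" using G[OF sK] by (elim exE conjE)
    have a: "continuous_on ({0..1::real} \<times> geom_simplex \<sigma>) (G \<circ> snd)"
      by (rule continuous_on_compose) (auto intro: continuous_on_snd continuous_on_subset[OF T(4)])
    have b: "(G \<circ> snd) ` ({0..1::real} \<times> geom_simplex \<sigma>) \<subseteq> \<Union>(geom_simplex ` T)"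
      using T(3) by auto
    show "\<exists>T. finite T \<and> T \<subseteq> K' \<and> (G \<circ> snd) ` ({0..1::real} \<times> geom_simplex \<sigma>) \<subseteq> \<Union>(geom_simplex ` T) \<and>
        continuous_on ({0..1::real} \<times> geom_simplex \<sigma>) (G \<circ> snd)"
      by (rule exI[of _ T], intro conjI T(1) T(2) a b)
  qed
  moreover have "continuous_map (realization_top K) (prod_topology (top_of_set {0..1::real}) (realization_top K)) (\<lambda>x. (0,x))"
    by (intro continuous_map_pairedI continuous_map_id continuous_map_const[THEN iffD2]) auto
  ultimately have "continuous_map (realization_top K) (realization_top K') ((G \<circ> snd) \<circ> (\<lambda>x. (0::real,x)))"
    by (metis continuous_map_compose)
  then show ?thesis by (simp add: o_def)
qed

lemma weq_retract:
  assumes c1: "continuous_map (realization_top L) (realization_top K) (\<lambda>x. x)"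
    and c2: "continuous_map (realization_top K) (realization_top L) r"
    and c3: "continuous_map (prod_topology (top_of_set {0..1::real}) (realization_top K)) (realization_top K)
               (\<lambda>(t,x). (\<lambda>i. t * x i + (1-t) * r x i))"
    and fx: "\<And>x. x \<in> geom_realization L \<Longrightarrow> r x = x"
  shows "weak_equivalence (realization_top L) (realization_top K) (\<lambda>x. x)"
  unfolding weak_equivalence_def
proof (rule conjI[OF c1], intro allI impI, rule conjI)
  fix n x0 assume x0: "x0 \<in> topspace (realization_top L)"
  then have rx0: "r x0 = x0" using fx by simp
  show "\<forall>g. pointed_sphere_map n (realization_top K) x0 g \<longrightarrow>
          (\<exists>h. pointed_sphere_map n (realization_top L) x0 h \<and>
               pointed_homotopic n (realization_top K) x0 ((\<lambda>x. x) \<circ> h) g)"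
  proof (intro allI impI)
    fix g assume g: "pointed_sphere_map n (realization_top K) x0 g"
    then have gc: "continuous_map (nsphere n) (realization_top K) g" and gb: "g sphere_base = x0"
      by (auto simp: pointed_sphere_map_def)
    have "pointed_sphere_map n (realization_top L) x0 (r \<circ> g)"
      unfolding pointed_sphere_map_def using gc gb rx0 c2 by (auto intro: continuous_map_compose)
    moreover have "pointed_homotopic n (realization_top K) x0 ((\<lambda>x. x) \<circ> (r \<circ> g)) g"
    proof -
      define k where "k = (\<lambda>(t,x). (\<lambda>i. t * x i + (1-t) * r x i)) \<circ> (\<lambda>(t::real,s). (t, g s))"
      have "continuous_map (prod_topology (top_of_set {0..1::real}) (nsphere n))
           (prod_topology (top_of_set {0..1::real}) (realization_top K)) (\<lambda>(t,s). (t, g s))"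
        unfolding case_prod_unfold
        by (intro continuous_map_pairedI continuous_map_fst continuous_map_compose[OF continuous_map_snd gc, unfolded o_def])
      then have kc: "continuous_map (prod_topology (top_of_set {0..1}) (nsphere n)) (realization_top K) k"
        unfolding k_def by (rule continuous_map_compose[OF _ c3])
      have k0: "k (0, x) = ((\<lambda>x. x) \<circ> (r \<circ> g)) x" for x by (simp add: k_def)
      have k1: "k (1, x) = g x" for x by (simp add: k_def)
      have kb: "(\<lambda>x. k (t, x)) sphere_base = x0" for t using gb rx0 by (simp add: k_def algebra_simps)
      show ?thesis
        unfolding pointed_homotopic_def homotopic_with_def
        using kc k0 k1 kb by blast
    qed
    ultimately show "\<exists>h. pointed_sphere_map n (realization_top L) x0 h \<and>
               pointed_homotopic n (realization_top K) x0 ((\<lambda>x. x) \<circ> h) g" by blast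
  qed
  show "\<forall>h1 h2. pointed_sphere_map n (realization_top L) x0 h1 \<and> pointed_sphere_map n (realization_top L) x0 h2 \<and>
             pointed_homotopic n (realization_top K) x0 ((\<lambda>x. x) \<circ> h1) ((\<lambda>x. x) \<circ> h2) \<longrightarrow>
             pointed_homotopic n (realization_top L) x0 h1 h2"
  proof (intro allI impI, elim conjE)
    fix h1 h2 assume h1: "pointed_sphere_map n (realization_top L) x0 h1"
      and h2: "pointed_sphere_map n (realization_top L) x0 h2"
      and hh: "pointed_homotopic n (realization_top K) x0 ((\<lambda>x. x) \<circ> h1) ((\<lambda>x. x) \<circ> h2)"
    have "homotopic_with (\<lambda>k. k sphere_base = x0) (nsphere n) (realization_top L) (r \<circ> ((\<lambda>x. x) \<circ> h1)) (r \<circ> ((\<lambda>x. x) \<circ> h2))"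
      using hh unfolding pointed_homotopic_def
      by (rule homotopic_with_compose_continuous_map_left[OF _ c2]) (simp add: rx0)
    then show "pointed_homotopic n (realization_top L) x0 h1 h2"
      unfolding pointed_homotopic_def
    proof (rule homotopic_with_eq)
      fix x assume "x \<in> topspace (nsphere n)"
      then have "h1 x \<in> geom_realization L" "h2 x \<in> geom_realization L"
        using h1 h2 unfolding pointed_sphere_map_def continuous_map_def by auto
      then show "h1 x = (r \<circ> ((\<lambda>x. x) \<circ> h1)) x" "h2 x = (r \<circ> ((\<lambda>x. x) \<circ> h2)) x"
        using fx by auto
    next
      fix h k :: "(nat \<Rightarrow> real) \<Rightarrow> ('a \<Rightarrow> real)"
      assume "\<And>x. x \<in> topspace (nsphere n) \<Longrightarrow> h x = k x"
      moreover have "sphere_base \<in> topspace (nsphere n)"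
        using in_topspace_nsphere by (simp add: sphere_base_def)
      ultimately show "(h sphere_base = x0) = (k sphere_base = x0)" by simp
    qed
  qed
qed

definition aX :: "'a set \<Rightarrow> ('a \<Rightarrow> real) \<Rightarrow> real" where
  "aX S x = sum x {i\<in>S. x i \<noteq> 0}"

definition Dm :: "'a set \<Rightarrow> 'a set \<Rightarrow> ('a \<Rightarrow> real) \<Rightarrow> 'a \<Rightarrow> real" where
  "Dm xs ys x i = (if i \<in> xs then min (x i) (aX ys x) else if i \<in> ys then min (x i) (aX xs x) else 0)"

definition rr :: "'a set \<Rightarrow> 'a set \<Rightarrow> 'a \<Rightarrow> ('a \<Rightarrow> real) \<Rightarrow> ('a \<Rightarrow> real)" where
  "rr xs ys v x = (\<lambda>i. x i - Dm xs ys x i + (if i = v then sum (Dm xs ys x) {j. x j \<noteq> 0} else 0))"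

lemma gs_nonneg: "x \<in> geom_simplex \<sigma> \<Longrightarrow> 0 \<le> x i"
  by (auto simp: geom_simplex_def)

lemma gs_zero: "x \<in> geom_simplex \<sigma> \<Longrightarrow> i \<notin> \<sigma> \<Longrightarrow> x i = 0"
  by (auto simp: geom_simplex_def)

lemma gs_sum: "x \<in> geom_simplex \<sigma> \<Longrightarrow> sum x \<sigma> = 1"
  by (auto simp: geom_simplex_def)

lemma gs_intro: "(\<And>i. 0 \<le> x i) \<Longrightarrow> (\<And>i. i \<notin> \<sigma> \<Longrightarrow> x i = 0) \<Longrightarrow> sum x \<sigma> = 1 \<Longrightarrow> x \<in> geom_simplex \<sigma>"
  by (auto simp: geom_simplex_def)

lemma gs_mono:
  assumes "x \<in> geom_simplex \<sigma>" "\<sigma> \<subseteq> \<tau>" "finite \<tau>"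
  shows "x \<in> geom_simplex \<tau>"
proof (rule gs_intro)
  show "0 \<le> x i" for i using gs_nonneg[OF assms(1)] .
  show "x i = 0" if "i \<notin> \<tau>" for i using assms(2) that gs_zero[OF assms(1)] by blast
  have "sum x \<tau> = sum x \<sigma>"
    using assms by (intro sum.mono_neutral_right) (auto simp: gs_zero)
  then show "sum x \<tau> = 1" using gs_sum[OF assms(1)] by simp
qed

lemma gs_restrict:
  assumes "x \<in> geom_simplex \<tau>" "finite \<tau>" "\<And>i. i \<in> \<tau> \<Longrightarrow> i \<notin> S \<Longrightarrow> x i = 0"
  shows "x \<in> geom_simplex (\<tau> \<inter> S)"
proof (rule gs_intro)
  show "0 \<le> x i" for i using gs_nonneg[OF assms(1)] .
  show "x i = 0" if "i \<notin> \<tau> \<inter> S" for i using assms(3) that gs_zero[OF assms(1)] by blast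
  have "sum x (\<tau> \<inter> S) = sum x \<tau>"
    using assms by (intro sum.mono_neutral_left) auto
  then show "sum x (\<tau> \<inter> S) = 1" using gs_sum[OF assms(1)] by simp
qed

lemma gs_conv:
  assumes "x \<in> geom_simplex \<tau>" "y \<in> geom_simplex \<tau>" "0 \<le> t" "t \<le> 1"
  shows "(\<lambda>i. t * x i + (1 - t) * y i) \<in> geom_simplex \<tau>"
proof (rule gs_intro)
  show "0 \<le> t * x i + (1 - t) * y i" for i
    using assms gs_nonneg[OF assms(1)] gs_nonneg[OF assms(2)] by (simp add: add_nonneg_nonneg)
  show "t * x i + (1 - t) * y i = 0" if "i \<notin> \<tau>" for i
    using gs_zero[OF assms(1) that] gs_zero[OF assms(2) that] by simp
  show "(\<Sum>i\<in>\<tau>. t * x i + (1 - t) * y i) = 1"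
    using gs_sum[OF assms(1)] gs_sum[OF assms(2)] by (simp add: sum.distrib sum_distrib_left[symmetric])
qed

lemma gs_supp: "x \<in> geom_simplex \<sigma> \<Longrightarrow> {i. x i \<noteq> 0} \<subseteq> \<sigma>"
  by (auto simp: geom_simplex_def)

lemma aX_eq:
  assumes "x \<in> geom_simplex \<sigma>" "finite \<sigma>"
  shows "aX S x = sum x (\<sigma> \<inter> S)"
  unfolding aX_def using assms gs_supp[OF assms(1)] by (intro sum.mono_neutral_left) auto

lemma aX_nonneg: "x \<in> geom_simplex \<sigma> \<Longrightarrow> 0 \<le> aX S x"
  unfolding aX_def by (intro sum_nonneg) (auto simp: gs_nonneg)

lemma Dm_zero: "x \<in> geom_simplex \<sigma> \<Longrightarrow> x i = 0 \<Longrightarrow> Dm xs ys x i = 0"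
  unfolding Dm_def using aX_nonneg[of x \<sigma> xs] aX_nonneg[of x \<sigma> ys] by auto

lemma Dm_nonneg: "x \<in> geom_simplex \<sigma> \<Longrightarrow> 0 \<le> Dm xs ys x i"
  unfolding Dm_def using aX_nonneg gs_nonneg by auto

lemma Dm_le: "x \<in> geom_simplex \<sigma> \<Longrightarrow> Dm xs ys x i \<le> x i"
  unfolding Dm_def using gs_nonneg by auto

lemma sumDm_eq:
  assumes "x \<in> geom_simplex \<sigma>" "finite \<sigma>"
  shows "sum (Dm xs ys x) {j. x j \<noteq> 0} = sum (Dm xs ys x) \<sigma>"
  using assms gs_supp[OF assms(1)] by (intro sum.mono_neutral_left) (auto simp: Dm_zero)

lemma rr_id:
  assumes "x \<in> geom_simplex \<sigma>" "finite \<sigma>" "\<sigma> \<inter> xs = {} \<or> \<sigma> \<inter> ys = {}"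
  shows "rr xs ys v x = x"
proof -
  have "Dm xs ys x i = 0" for i
  proof (cases "\<sigma> \<inter> ys = {}")
    case True
    then have "aX ys x = 0" using aX_eq[OF assms(1,2)] by simp
    have "i \<in> ys \<Longrightarrow> x i = 0" using True gs_zero[OF assms(1)] by blast
    then show ?thesis using gs_nonneg[OF assms(1), of i] \<open>aX ys x = 0\<close> aX_nonneg[OF assms(1), of xs]
      unfolding Dm_def by (auto simp: min_def)
  next
    case False
    then have T: "\<sigma> \<inter> xs = {}" using assms(3) by blast
    then have "aX xs x = 0" using aX_eq[OF assms(1,2)] by simp
    have "i \<in> xs \<Longrightarrow> x i = 0" using T gs_zero[OF assms(1)] by blast
    then show ?thesis using gs_nonneg[OF assms(1), of i] \<open>aX xs x = 0\<close> aX_nonneg[OF assms(1), of ys]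
      unfolding Dm_def by (auto simp: min_def)
  qed
  then show ?thesis unfolding rr_def by (simp add: fun_eq_iff)
qed

lemma rr_main:
  assumes x: "x \<in> geom_simplex \<sigma>" and fin: "finite \<sigma>" and v: "v \<notin> xs" "v \<notin> ys"
    and disj: "xs \<inter> ys = {}"
  shows "rr xs ys v x \<in> geom_simplex (insert v \<sigma>)"
    and "(\<forall>i\<in>ys. rr xs ys v x i = 0) \<or> (\<forall>i\<in>xs. rr xs ys v x i = 0)"
proof -
  let ?D = "Dm xs ys x"
  let ?r = "rr xs ys v x"
  have Dv: "?D v = 0" using v by (simp add: Dm_def)
  have sD: "sum ?D {j. x j \<noteq> 0} = sum ?D \<sigma>" by (rule sumDm_eq[OF x fin])
  show "?r \<in> geom_simplex (insert v \<sigma>)"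
  proof (rule gs_intro)
    fix i
    have "0 \<le> sum ?D \<sigma>" by (intro sum_nonneg) (simp add: Dm_nonneg[OF x])
    then show "0 \<le> ?r i" using Dm_le[OF x, of xs ys i] sD unfolding rr_def by auto
  next
    fix i assume "i \<notin> insert v \<sigma>"
    then show "?r i = 0" using gs_zero[OF x] Dm_zero[OF x] unfolding rr_def by auto
  next
    have "sum ?r (insert v \<sigma>) = sum x (insert v \<sigma>) - sum ?D (insert v \<sigma>) + sum ?D \<sigma>"
      unfolding rr_def using fin sD by (simp add: sum.distrib sum_subtractf)
    also have "sum x (insert v \<sigma>) = sum x \<sigma>"
      using fin gs_zero[OF x] by (cases "v \<in> \<sigma>") (auto simp: insert_absorb)
    also have "sum ?D (insert v \<sigma>) = sum ?D \<sigma>"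
      using fin Dv by (cases "v \<in> \<sigma>") (auto simp: insert_absorb)
    finally show "sum ?r (insert v \<sigma>) = 1" using gs_sum[OF x] by simp
  qed
  let ?a = "sum x (\<sigma> \<inter> xs)"
  let ?b = "sum x (\<sigma> \<inter> ys)"
  have a: "aX xs x = ?a" and b: "aX ys x = ?b" using aX_eq[OF x fin] by auto
  show "(\<forall>i\<in>ys. ?r i = 0) \<or> (\<forall>i\<in>xs. ?r i = 0)"
  proof (cases "\<forall>j\<in>\<sigma> \<inter> ys. x j \<le> ?a")
    case True
    have "?r i = 0" if "i \<in> ys" for i
    proof (cases "i \<in> \<sigma>")
      case True': True
      have "i \<notin> xs" using disj that by blast
      then have "?D i = x i" using True True' that a by (simp add: Dm_def min_def)
      moreover have "i \<noteq> v" using v that by blast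
      ultimately show ?thesis unfolding rr_def by simp
    next
      case False
      then have "x i = 0" using gs_zero[OF x] by blast
      moreover have "i \<noteq> v" using v that by blast
      ultimately show ?thesis unfolding rr_def using Dm_zero[OF x] by simp
    qed
    then show ?thesis by blast
  next
    case False
    then obtain j where j: "j \<in> \<sigma> \<inter> ys" "x j > ?a" by force
    have "x j \<le> ?b" using j fin gs_nonneg[OF x] by (intro member_le_sum) auto
    have "?r i = 0" if "i \<in> xs" for i
    proof (cases "i \<in> \<sigma>")
      case True
      have "x i \<le> ?a" using True that fin gs_nonneg[OF x] by (intro member_le_sum) auto
      then have "?D i = x i" using \<open>x j \<le> ?b\<close> j that b by (simp add: Dm_def min_def)
      moreover have "i \<noteq> v" using v that by blast
      ultimately show ?thesis unfolding rr_def by simp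
    next
      case False
      then have "x i = 0" using gs_zero[OF x] by blast
      moreover have "i \<noteq> v" using v that by blast
      ultimately show ?thesis unfolding rr_def using Dm_zero[OF x] by simp
    qed
    then show ?thesis by blast
  qed
qed

lemma cont_coord [continuous_intros]: "continuous_on S (\<lambda>x::'a\<Rightarrow>real. x i)"
  by (rule continuous_on_subset[OF continuous_on_product_coordinates]) auto

definition Dsig :: "'a set \<Rightarrow> 'a set \<Rightarrow> 'a set \<Rightarrow> ('a \<Rightarrow> real) \<Rightarrow> 'a \<Rightarrow> real" where
  "Dsig \<sigma> xs ys x i = (if i \<in> xs then min (x i) (\<Sum>j\<in>\<sigma> \<inter> ys. x j)
      else if i \<in> ys then min (x i) (\<Sum>j\<in>\<sigma> \<inter> xs. x j) else 0)"

lemma cont_Dsig [continuous_intros]: "continuous_on S (\<lambda>x. Dsig \<sigma> xs ys x i)"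
  unfolding Dsig_def by (cases "i \<in> xs"; cases "i \<in> ys") (auto intro!: continuous_intros)

lemma Dm_Dsig: "x \<in> geom_simplex \<sigma> \<Longrightarrow> finite \<sigma> \<Longrightarrow> Dm xs ys x i = Dsig \<sigma> xs ys x i"
  unfolding Dm_def Dsig_def by (simp add: aX_eq)

lemma cont_rr:
  assumes fin: "finite \<sigma>"
  shows "continuous_on (geom_simplex \<sigma>) (rr xs ys v)"
proof (rule continuous_on_eq)
  let ?f = "\<lambda>x i. x i - Dsig \<sigma> xs ys x i + (if i = v then (\<Sum>j\<in>\<sigma>. Dsig \<sigma> xs ys x j) else 0)"
  show "continuous_on (geom_simplex \<sigma>) ?f"
  proof (rule continuous_on_coordinatewise_then_product)
    fix i show "continuous_on (geom_simplex \<sigma>) (\<lambda>x. ?f x i)"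
      by (cases "i = v") (auto intro!: continuous_intros)
  qed
  fix x assume x: "x \<in> geom_simplex \<sigma>"
  show "?f x = rr xs ys v x"
    unfolding rr_def using sumDm_eq[OF x fin] Dm_Dsig[OF x fin] by (simp add: fun_eq_iff)
qed

lemma cont_H:
  assumes fin: "finite \<sigma>"
  shows "continuous_on ({0..1::real} \<times> geom_simplex \<sigma>) (\<lambda>(t,x). (\<lambda>i. t * x i + (1-t) * rr xs ys v x i))"
  unfolding case_prod_unfold
proof (rule continuous_on_coordinatewise_then_product)
  fix i
  have c: "continuous_on (geom_simplex \<sigma>) (\<lambda>x. rr xs ys v x i)"
    by (rule continuous_on_product_then_coordinatewise[OF cont_rr[OF fin]])
  have c2: "continuous_on ({0..1::real} \<times> geom_simplex \<sigma>) (\<lambda>z. rr xs ys v (snd z) i)"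
    by (rule continuous_on_compose2[OF c]) (auto intro: continuous_on_snd)
  have c3: "continuous_on ({0..1::real} \<times> geom_simplex \<sigma>) (\<lambda>z. snd z i)"
    by (rule continuous_on_compose2[OF cont_coord[of UNIV i]]) (auto intro: continuous_on_snd)
  show "continuous_on ({0..1} \<times> geom_simplex \<sigma>) (\<lambda>z. fst z * snd z i + (1 - fst z) * rr xs ys v (snd z) i)"
    by (intro continuous_intros c2 c3)
qed

lemma sc_finite: "simplicial_complex K \<Longrightarrow> \<sigma> \<in> K \<Longrightarrow> finite \<sigma>"
  by (auto simp: simplicial_complex_def)

lemma sc_down: "simplicial_complex K \<Longrightarrow> \<sigma> \<in> K \<Longrightarrow> \<mu> \<subseteq> \<sigma> \<Longrightarrow> \<mu> \<noteq> {} \<Longrightarrow> \<mu> \<in> K"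
  unfolding simplicial_complex_def by blast

lemma concrete:
  assumes sc: "simplicial_complex K"
    and XY: "X \<union> Y = vertices K"
    and vA: "\<forall>\<sigma>\<in>K. \<sigma> \<inter> (X - Y) \<noteq> {} \<and> \<sigma> \<inter> (Y - X) \<noteq> {} \<longrightarrow> v \<in> X \<inter> Y \<and> insert v \<sigma> \<in> K"
  shows "weak_equivalence (realization_top (full_subcomplex K X \<union> full_subcomplex K Y)) (realization_top K) (\<lambda>x. x)"
proof -
  let ?L = "full_subcomplex K X \<union> full_subcomplex K Y"
  let ?xs = "X - Y" and ?ys = "Y - X"
  let ?r = "rr ?xs ?ys v"
  have finK: "\<forall>\<sigma>\<in>K. finite \<sigma>" using sc sc_finite by blast
  have LK: "?L \<subseteq> K" by (auto simp: full_subcomplex_def)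
  have finL: "\<forall>\<sigma>\<in>?L. finite \<sigma>" using finK LK by blast
  have sXY: "\<sigma> \<subseteq> X \<union> Y" if "\<sigma> \<in> K" for \<sigma>
  proof
    fix u assume "u \<in> \<sigma>"
    then have "{u} \<in> K" using sc_down[OF sc that, of "{u}"] by auto
    then show "u \<in> X \<union> Y" using XY by (auto simp: vertices_def)
  qed
  have good: "?r x = x \<and> \<sigma> \<in> ?L" if "\<sigma> \<in> K" "x \<in> geom_simplex \<sigma>" "\<not> (\<sigma> \<inter> ?xs \<noteq> {} \<and> \<sigma> \<inter> ?ys \<noteq> {})" for \<sigma> x
  proof
    show "?r x = x" using rr_id[OF that(2) sc_finite[OF sc that(1)]] that(3) by blast
    have "\<sigma> \<subseteq> X \<or> \<sigma> \<subseteq> Y" using that(3) sXY[OF that(1)] by blast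
    then show "\<sigma> \<in> ?L" using that(1) by (auto simp: full_subcomplex_def)
  qed
  have goodL: "\<sigma> \<in> ?L" if "\<sigma> \<in> K" "\<not> (\<sigma> \<inter> ?xs \<noteq> {} \<and> \<sigma> \<inter> ?ys \<noteq> {})" for \<sigma>
  proof -
    have "\<sigma> \<subseteq> X \<or> \<sigma> \<subseteq> Y" using that(2) sXY[OF that(1)] by blast
    then show "\<sigma> \<in> ?L" using that(1) by (auto simp: full_subcomplex_def)
  qed
  have badL: "insert v \<sigma> \<inter> X \<in> ?L \<and> insert v \<sigma> \<inter> Y \<in> ?L"
    if "\<sigma> \<in> K" "\<sigma> \<inter> ?xs \<noteq> {}" "\<sigma> \<inter> ?ys \<noteq> {}" for \<sigma>
  proof -
    have v: "v \<in> X \<inter> Y" and iK: "insert v \<sigma> \<in> K" using vA that by auto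
    show ?thesis
      using sc_down[OF sc iK, of "insert v \<sigma> \<inter> X"] sc_down[OF sc iK, of "insert v \<sigma> \<inter> Y"] v
      by (auto simp: full_subcomplex_def)
  qed
  have bad: "insert v \<sigma> \<in> K \<and> ?r x \<in> geom_simplex (insert v \<sigma>) \<and>
       (?r x \<in> geom_simplex (insert v \<sigma> \<inter> X) \<or> ?r x \<in> geom_simplex (insert v \<sigma> \<inter> Y))
       \<and> insert v \<sigma> \<inter> X \<in> ?L \<and> insert v \<sigma> \<inter> Y \<in> ?L"
    if "\<sigma> \<in> K" "x \<in> geom_simplex \<sigma>" "\<sigma> \<inter> ?xs \<noteq> {}" "\<sigma> \<inter> ?ys \<noteq> {}" for \<sigma> x
  proof -
    have v: "v \<in> X \<inter> Y" and iK: "insert v \<sigma> \<in> K" using vA that by auto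
    have fin: "finite \<sigma>" using sc_finite[OF sc that(1)] .
    have fin': "finite (insert v \<sigma>)" using fin by simp
    have m1: "?r x \<in> geom_simplex (insert v \<sigma>)"
      and m2: "(\<forall>i\<in>?ys. ?r x i = 0) \<or> (\<forall>i\<in>?xs. ?r x i = 0)"
      using rr_main[OF that(2) fin, of v ?xs ?ys] v by auto
    have sub: "insert v \<sigma> \<subseteq> X \<union> Y" using v sXY[OF that(1)] by auto
    have "?r x \<in> geom_simplex (insert v \<sigma> \<inter> X) \<or> ?r x \<in> geom_simplex (insert v \<sigma> \<inter> Y)"
    proof (cases "\<forall>i\<in>?ys. ?r x i = 0")
      case True
      have "?r x \<in> geom_simplex (insert v \<sigma> \<inter> X)"
        by (rule gs_restrict[OF m1 fin']) (use True sub in auto)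
      then show ?thesis ..
    next
      case False
      then have F: "\<forall>i\<in>?xs. ?r x i = 0" using m2 by blast
      have "?r x \<in> geom_simplex (insert v \<sigma> \<inter> Y)"
        by (rule gs_restrict[OF m1 fin']) (use F sub in auto)
      then show ?thesis ..
    qed
    moreover have "insert v \<sigma> \<inter> X \<in> ?L" "insert v \<sigma> \<inter> Y \<in> ?L"
      using sc_down[OF sc iK, of "insert v \<sigma> \<inter> X"] sc_down[OF sc iK, of "insert v \<sigma> \<inter> Y"] v
      by (auto simp: full_subcomplex_def)
    ultimately show ?thesis using iK m1 by blast
  qed
  show ?thesis
  proof (rule weq_retract)
    show "continuous_map (realization_top ?L) (realization_top K) (\<lambda>x. x)"
    proof (rule cont_rt[OF finK])
      fix \<sigma> assume "\<sigma> \<in> ?L"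
      then have "\<sigma> \<in> K" using LK by blast
      show "\<exists>T. finite T \<and> T \<subseteq> K \<and> (\<lambda>x. x) ` geom_simplex \<sigma> \<subseteq> \<Union>(geom_simplex ` T) \<and>
             continuous_on (geom_simplex \<sigma>) (\<lambda>x. x)"
        using \<open>\<sigma> \<in> K\<close> by (intro exI[of _ "{\<sigma>}"]) (auto intro: continuous_on_id)
    qed
    show "continuous_map (realization_top K) (realization_top ?L) ?r"
    proof (rule cont_rt[OF finL])
      fix \<sigma> assume s: "\<sigma> \<in> K"
      have c: "continuous_on (geom_simplex \<sigma>) ?r" using cont_rr[OF sc_finite[OF sc s]] .
      show "\<exists>T. finite T \<and> T \<subseteq> ?L \<and> ?r ` geom_simplex \<sigma> \<subseteq> \<Union>(geom_simplex ` T) \<and>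
             continuous_on (geom_simplex \<sigma>) ?r"
      proof (cases "\<sigma> \<inter> ?xs \<noteq> {} \<and> \<sigma> \<inter> ?ys \<noteq> {}")
        case True
        show ?thesis
        proof (intro exI[of _ "{insert v \<sigma> \<inter> X, insert v \<sigma> \<inter> Y}"] conjI c)
          show "?r ` geom_simplex \<sigma> \<subseteq> \<Union>(geom_simplex ` {insert v \<sigma> \<inter> X, insert v \<sigma> \<inter> Y})"
            using bad[OF s _ conjunct1[OF True] conjunct2[OF True]] by blast
          show "{insert v \<sigma> \<inter> X, insert v \<sigma> \<inter> Y} \<subseteq> ?L"
            using badL[OF s conjunct1[OF True] conjunct2[OF True]] by blast
        qed simp
      next
        case False
        show ?thesis
        proof (intro exI[of _ "{\<sigma>}"] conjI c)
          show "?r ` geom_simplex \<sigma> \<subseteq> \<Union>(geom_simplex ` {\<sigma>})"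
            using good[OF s _ False] by auto
          have "\<sigma> \<in> ?L" using goodL[OF s False] .
          then show "{\<sigma>} \<subseteq> ?L" by simp
        qed simp
      qed
    qed
    show "continuous_map (prod_topology (top_of_set {0..1::real}) (realization_top K)) (realization_top K)
               (\<lambda>(t,x). (\<lambda>i. t * x i + (1-t) * ?r x i))"
    proof (rule cont_prod_rt[OF finK])
      fix \<sigma> assume s: "\<sigma> \<in> K"
      have fin: "finite \<sigma>" using sc_finite[OF sc s] .
      have c: "continuous_on ({0..1::real} \<times> geom_simplex \<sigma>) (\<lambda>(t,x). (\<lambda>i. t * x i + (1-t) * ?r x i))"
        by (rule cont_H[OF fin])
      show "\<exists>T. finite T \<and> T \<subseteq> K \<and> (\<lambda>(t::real,x). (\<lambda>i. t * x i + (1-t) * ?r x i)) ` ({0..1} \<times> geom_simplex \<sigma>) \<subseteq> \<Union>(geom_simplex ` T) \<and>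
             continuous_on ({0..1} \<times> geom_simplex \<sigma>) (\<lambda>(t,x). (\<lambda>i. t * x i + (1-t) * ?r x i))"
      proof (cases "\<sigma> \<inter> ?xs \<noteq> {} \<and> \<sigma> \<inter> ?ys \<noteq> {}")
        case True
        have B1: "insert v \<sigma> \<in> K" using vA s True by blast
        have B2: "\<And>x. x \<in> geom_simplex \<sigma> \<Longrightarrow> ?r x \<in> geom_simplex (insert v \<sigma>)"
          using bad[OF s _ conjunct1[OF True] conjunct2[OF True]] by blast
        note B = B1 B2
        show ?thesis
        proof (intro exI[of _ "{insert v \<sigma>}"] conjI c)
          show "(\<lambda>(t::real,x). (\<lambda>i. t * x i + (1-t) * ?r x i)) ` ({0..1} \<times> geom_simplex \<sigma>) \<subseteq> \<Union>(geom_simplex ` {insert v \<sigma>})"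
          proof clarsimp
            fix t :: real and x assume tx: "0 \<le> t" "t \<le> 1" "x \<in> geom_simplex \<sigma>"
            have "x \<in> geom_simplex (insert v \<sigma>)" using gs_mono[OF tx(3)] fin by auto
            then show "(\<lambda>i. t * x i + (1-t) * ?r x i) \<in> geom_simplex (insert v \<sigma>)"
              using gs_conv[OF _ B(2)[OF tx(3)] tx(1,2)] by blast
          qed
        qed (use B in auto)
      next
        case False
        show ?thesis
        proof (intro exI[of _ "{\<sigma>}"] conjI c)
          show "(\<lambda>(t::real,x). (\<lambda>i. t * x i + (1-t) * ?r x i)) ` ({0..1} \<times> geom_simplex \<sigma>) \<subseteq> \<Union>(geom_simplex ` {\<sigma>})"
          proof clarsimp
            fix t :: real and x assume tx: "0 \<le> t" "t \<le> 1" "x \<in> geom_simplex \<sigma>"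
            have "?r x = x" using good[OF s tx(3) False] by blast
            then show "(\<lambda>i. t * x i + (1-t) * ?r x i) \<in> geom_simplex \<sigma>"
              using tx(3) by (simp add: algebra_simps)
          qed
        qed (use s in auto)
      qed
    qed
    fix x assume "x \<in> geom_realization ?L"
    then obtain \<sigma> where s: "\<sigma> \<in> ?L" "x \<in> geom_simplex \<sigma>" by (auto simp: geom_realization_def)
    then have "\<sigma> \<subseteq> X \<or> \<sigma> \<subseteq> Y" "\<sigma> \<in> K" by (auto simp: full_subcomplex_def)
    then have "\<not> (\<sigma> \<inter> ?xs \<noteq> {} \<and> \<sigma> \<inter> ?ys \<noteq> {})" by blast
    then show "?r x = x" using good[OF \<open>\<sigma> \<in> K\<close> s(2)] by blast
  qed
qed

lemma clique_insert:
  assumes sc: "simplicial_complex K" and cl: "clique_complex K"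
    and s: "\<sigma> \<in> K" and xy: "x \<in> \<sigma>" "y \<in> \<sigma>" "x \<noteq> y"
    and pv: "\<And>u. u \<in> \<sigma> \<Longrightarrow> u \<noteq> v \<Longrightarrow> {v, u} \<in> K"
  shows "insert v \<sigma> \<in> K"
proof -
  have fin: "finite (insert v \<sigma>)" using sc_finite[OF sc s] by simp
  have "card {x, y} \<le> card (insert v \<sigma>)" using fin xy by (intro card_mono) auto
  then have c2: "card (insert v \<sigma>) \<ge> 2" using xy by simp
  have "{u, w} \<in> K" if "u \<in> insert v \<sigma>" "w \<in> insert v \<sigma>" "u \<noteq> w" for u w
  proof -
    { assume "u \<in> \<sigma>" "w \<in> \<sigma>"
      then have ?thesis using sc_down[OF sc s, of "{u,w}"] by auto }
    moreover
    { assume "u = v" then have ?thesis using that pv by auto }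
    moreover
    { assume "w = v" then have ?thesis using that pv[of u] by (auto simp: insert_commute) }
    ultimately show ?thesis using that by blast
  qed
  then show ?thesis using cl fin c2 unfolding clique_complex_def by blast
qed

theorem proposition9p5:
  fixes K :: "'a set set" and X Y :: "'a set"
  assumes "simplicial_complex K"
    and "clique_complex K"
    and "X \<union> Y = vertices K"
  defines "A \<equiv> X \<inter> Y"
  defines "P \<equiv> {\<sigma>\<in>K. \<sigma> \<subseteq> X \<or> \<sigma> \<subseteq> Y \<or> \<sigma> \<inter> A \<noteq> {}}"
  assumes "(\<exists>v. (\<forall>\<tau>\<in>edges K - P. {v} \<in> St K \<tau> A) \<and>
              (\<forall>\<tau>\<in>edges K - P. \<forall>w. {w} \<in> St K \<tau> A \<longrightarrow> {v, w} \<in> K))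
         \<or> (\<exists>v. (\<forall>\<tau>\<in>edges K - P. {v} \<in> St K \<tau> A) \<and>
              (\<forall>\<tau>\<in>edges K - P. central_vertex (St K \<tau> A) v))
         \<or> (\<exists>v\<in>A. \<forall>\<tau>\<in>K. card (\<tau> \<inter> (X - A)) = 1 \<and> card (\<tau> \<inter> (Y - A)) = 1
                         \<and> card (\<tau> \<inter> A) \<le> 1 \<longrightarrow> insert v \<tau> \<in> K)"
  shows "weak_equivalence
           (realization_top (full_subcomplex K X \<union> full_subcomplex K Y))
           (realization_top K) (\<lambda>x. x)"
proof -
  note sc = assms(1) and cl = assms(2) and XY = assms(3) and H = assms(6)
  have XA: "X - A = X - Y" and YA: "Y - A = Y - X" unfolding A_def by auto
  have sXY: "\<sigma> \<subseteq> X \<union> Y" if "\<sigma> \<in> K" for \<sigma>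
  proof
    fix u assume "u \<in> \<sigma>"
    then have "{u} \<in> K" using sc_down[OF sc that, of "{u}"] by auto
    then show "u \<in> X \<union> Y" using XY by (auto simp: vertices_def)
  qed
  have edge: "{x, y} \<in> edges K - P" if "\<sigma> \<in> K" "x \<in> \<sigma>" "y \<in> \<sigma>" "x \<in> X - Y" "y \<in> Y - X" for \<sigma> x y
  proof -
    have "{x, y} \<in> K" using sc_down[OF sc that(1), of "{x,y}"] that by auto
    moreover have "x \<noteq> y" using that by auto
    then have "card {x, y} = 2" by simp
    ultimately show ?thesis using that unfolding edges_def P_def A_def by auto
  qed
  have case1: "\<exists>v. \<forall>\<sigma>\<in>K. \<sigma> \<inter> (X - Y) \<noteq> {} \<and> \<sigma> \<inter> (Y - X) \<noteq> {} \<longrightarrow> v \<in> X \<inter> Y \<and> insert v \<sigma> \<in> K"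
    if H1: "\<forall>\<tau>\<in>edges K - P. {v} \<in> St K \<tau> A" and H2: "\<forall>\<tau>\<in>edges K - P. \<forall>w. {w} \<in> St K \<tau> A \<longrightarrow> {v, w} \<in> K"
    for v
  proof (intro exI ballI impI)
    fix \<sigma> assume s: "\<sigma> \<in> K" and b: "\<sigma> \<inter> (X - Y) \<noteq> {} \<and> \<sigma> \<inter> (Y - X) \<noteq> {}"
    then obtain x y where xy: "x \<in> \<sigma>" "y \<in> \<sigma>" "x \<in> X - Y" "y \<in> Y - X" by blast
    have e: "{x, y} \<in> edges K - P" using edge[OF s xy] .
    then have "{v} \<in> St K {x, y} A" using H1 by blast
    then have vA: "v \<in> X \<inter> Y" and vxy: "{v} \<union> {x, y} \<in> K" unfolding St_def A_def by auto
    have "{v, u} \<in> K" if u: "u \<in> \<sigma>" "u \<noteq> v" for u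
    proof -
      have "u \<in> X - Y \<or> u \<in> Y - X \<or> u \<in> X \<inter> Y" using sXY[OF s] u by blast
      moreover
      { assume ux: "u \<in> X - Y"
        have "{v} \<in> St K {u, y} A" using H1 edge[OF s u(1) xy(2) ux xy(4)] by blast
        then have "{v} \<union> {u, y} \<in> K" unfolding St_def by auto
        then have "{v, u} \<in> K" using sc_down[OF sc, of "{v} \<union> {u, y}" "{v, u}"] by auto }
      moreover
      { assume uy: "u \<in> Y - X"
        have "{v} \<in> St K {x, u} A" using H1 edge[OF s xy(1) u(1) xy(3) uy] by blast
        then have "{v} \<union> {x, u} \<in> K" unfolding St_def by auto
        then have "{v, u} \<in> K" using sc_down[OF sc, of "{v} \<union> {x, u}" "{v, u}"] by auto }
      moreover
      { assume ua: "u \<in> X \<inter> Y"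
        have "{u} \<union> {x, y} \<in> K" using sc_down[OF sc s, of "{u} \<union> {x, y}"] u xy by auto
        then have "{u} \<in> St K {x, y} A" using ua unfolding St_def A_def by auto
        then have "{v, u} \<in> K" using H2 e by blast }
      ultimately show ?thesis by blast
    qed
    moreover have "x \<noteq> y" using xy by blast
    ultimately have "insert v \<sigma> \<in> K" using clique_insert[OF sc cl s xy(1,2)] by blast
    then show "v \<in> X \<inter> Y \<and> insert v \<sigma> \<in> K" using vA by blast
  qed
  have "\<exists>v. \<forall>\<sigma>\<in>K. \<sigma> \<inter> (X - Y) \<noteq> {} \<and> \<sigma> \<inter> (Y - X) \<noteq> {} \<longrightarrow> v \<in> X \<inter> Y \<and> insert v \<sigma> \<in> K"
  proof -
    { assume "\<exists>v. (\<forall>\<tau>\<in>edges K - P. {v} \<in> St K \<tau> A) \<and>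
              (\<forall>\<tau>\<in>edges K - P. \<forall>w. {w} \<in> St K \<tau> A \<longrightarrow> {v, w} \<in> K)"
      then have ?thesis using case1 by blast }
    moreover
    { assume "\<exists>v. (\<forall>\<tau>\<in>edges K - P. {v} \<in> St K \<tau> A) \<and>
              (\<forall>\<tau>\<in>edges K - P. central_vertex (St K \<tau> A) v)"
      then obtain v where H1: "\<forall>\<tau>\<in>edges K - P. {v} \<in> St K \<tau> A"
        and Hc: "\<forall>\<tau>\<in>edges K - P. central_vertex (St K \<tau> A) v" by blast
      have "\<forall>\<tau>\<in>edges K - P. \<forall>w. {w} \<in> St K \<tau> A \<longrightarrow> {v, w} \<in> K"
      proof (intro ballI allI impI)
        fix \<tau> w assume t: "\<tau> \<in> edges K - P" and w: "{w} \<in> St K \<tau> A"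
        then have "{w} \<union> {v} \<in> St K \<tau> A" using Hc unfolding central_vertex_def central_simplex_def by blast
        then have "{w} \<union> {v} \<union> \<tau> \<in> K" unfolding St_def by auto
        then show "{v, w} \<in> K" using sc_down[OF sc, of "{w} \<union> {v} \<union> \<tau>" "{v, w}"] by auto
      qed
      then have ?thesis using case1 H1 by blast }
    moreover
    { assume "\<exists>v\<in>A. \<forall>\<tau>\<in>K. card (\<tau> \<inter> (X - A)) = 1 \<and> card (\<tau> \<inter> (Y - A)) = 1
                         \<and> card (\<tau> \<inter> A) \<le> 1 \<longrightarrow> insert v \<tau> \<in> K"
      then obtain v where vA: "v \<in> X \<inter> Y" and H3: "\<forall>\<tau>\<in>K. card (\<tau> \<inter> (X - Y)) = 1 \<and> card (\<tau> \<inter> (Y - X)) = 1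
                         \<and> card (\<tau> \<inter> (X \<inter> Y)) \<le> 1 \<longrightarrow> insert v \<tau> \<in> K"
        unfolding XA YA by (auto simp: A_def)
      have ?thesis
      proof (intro exI ballI impI)
        fix \<sigma> assume s: "\<sigma> \<in> K" and b: "\<sigma> \<inter> (X - Y) \<noteq> {} \<and> \<sigma> \<inter> (Y - X) \<noteq> {}"
        then obtain x y where xy: "x \<in> \<sigma>" "y \<in> \<sigma>" "x \<in> X - Y" "y \<in> Y - X" by blast
        have "{v, u} \<in> K" if u: "u \<in> \<sigma>" "u \<noteq> v" for u
        proof -
          have "u \<in> X - Y \<or> u \<in> Y - X \<or> u \<in> X \<inter> Y" using sXY[OF s] u by blast
          moreover
          { assume ux: "u \<in> X - Y"
            have t: "{u, y} \<in> K" using sc_down[OF sc s, of "{u, y}"] u xy by auto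
            have "{u, y} \<inter> (X - Y) = {u}" "{u, y} \<inter> (Y - X) = {y}" "{u, y} \<inter> (X \<inter> Y) = {}"
              using ux xy by auto
            then have "insert v {u, y} \<in> K" using H3 t by auto
            then have "{v, u} \<in> K" using sc_down[OF sc, of "insert v {u, y}" "{v, u}"] by auto }
          moreover
          { assume uy: "u \<in> Y - X"
            have t: "{x, u} \<in> K" using sc_down[OF sc s, of "{x, u}"] u xy by auto
            have "{x, u} \<inter> (X - Y) = {x}" "{x, u} \<inter> (Y - X) = {u}" "{x, u} \<inter> (X \<inter> Y) = {}"
              using uy xy by auto
            then have "insert v {x, u} \<in> K" using H3 t by auto
            then have "{v, u} \<in> K" using sc_down[OF sc, of "insert v {x, u}" "{v, u}"] by auto }
          moreover
          { assume ua: "u \<in> X \<inter> Y"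
            have t: "{x, y, u} \<in> K" using sc_down[OF sc s, of "{x, y, u}"] u xy by auto
            have "{x, y, u} \<inter> (X - Y) = {x}" "{x, y, u} \<inter> (Y - X) = {y}" "{x, y, u} \<inter> (X \<inter> Y) = {u}"
              using ua xy by auto
            then have "insert v {x, y, u} \<in> K" using H3 t by auto
            then have "{v, u} \<in> K" using sc_down[OF sc, of "insert v {x, y, u}" "{v, u}"] by auto }
          ultimately show ?thesis by blast
        qed
        moreover have "x \<noteq> y" using xy by blast
        ultimately have "insert v \<sigma> \<in> K" using clique_insert[OF sc cl s xy(1,2)] by blast
        then show "v \<in> X \<inter> Y \<and> insert v \<sigma> \<in> K" using vA by blast
      qed }
    ultimately show ?thesis using H by blast
  qed
  then obtain v where "\<forall>\<sigma>\<in>K. \<sigma> \<inter> (X - Y) \<noteq> {} \<and> \<sigma> \<inter> (Y - X) \<noteq> {} \<longrightarrow> v \<in> X \<inter> Y \<and> insert v \<sigma> \<in> K"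
    by blast
  then show ?thesis using concrete[OF sc XY] by blast
qed

end
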